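(* Let $x,y,z$ be fixed roots of unity different from $1$, and let $S\subseteq\mathbb{P}_3$ be the surface defined by $\mathcal{E}^*(a,b,c,d)=0$, where $\mathcal{E}^*$ is obtained from \[\mathcal{E}=B_2^2-A_1B_1B_2+(A_1^2-2A_2)B_2+A_2B_1^2-A_1A_2B_1+A_2^2\] by substituting $A_1=\tfrac{y-x}{y-1}a+\tfrac{xy-1}{y-1}b$, $A_2=xab$, $B_1=\tfrac{z-x}{z-1}c+\tfrac{xz-1}{z-1}d$, $B_2=xcd$. Then $S$ is defined over $\mathbb{Q}$ if and only if either $x^4=y^4=z^4=1$ or $x^6=y^6=z^6=1$.
   Context: $a,b,c,d$ are homogeneous coordinates on $\mathbb{P}_3$; $\mathcal{E}^*$ is homogeneous of degree $4$ with coefficients in $\mathbb{Q}(x,y,z)$. $S$ is defined over $\mathbb{Q}$ if $\mathcal{E}^*$ is a nonzero scalar multiple of a polynomial with rational coefficients. *)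

theory Defs
  imports Complex_Main "HOL-Library.Poly_Mapping"
begin

text \<open>Polynomials in the variables a,b,c,d (indices 0,1,2,3) with complex coefficients,
  represented as finitely supported maps from monomials (exponent vectors) to coefficients.\<close>

type_synonym cpoly = "(nat \<Rightarrow>\<^sub>0 nat) \<Rightarrow>\<^sub>0 complex"

definition PVar :: "nat \<Rightarrow> cpoly" where
  "PVar i = Poly_Mapping.single (Poly_Mapping.single i 1) 1"

definition PConst :: "complex \<Rightarrow> cpoly" where
  "PConst c = Poly_Mapping.single 0 c"

definition root_of_unity :: "complex \<Rightarrow> bool" where
  "root_of_unity w \<longleftrightarrow> (\<exists>n::nat. n > 0 \<and> w ^ n = 1)"

definition E_star :: "complex \<Rightarrow> complex \<Rightarrow> complex \<Rightarrow> cpoly" where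
  "E_star x y z =
    (let a = PVar 0; b = PVar 1; c = PVar 2; d = PVar 3;
         A1 = PConst ((y - x) / (y - 1)) * a + PConst ((x * y - 1) / (y - 1)) * b;
         A2 = PConst x * a * b;
         B1 = PConst ((z - x) / (z - 1)) * c + PConst ((x * z - 1) / (z - 1)) * d;
         B2 = PConst x * c * d
     in B2 ^ 2 - A1 * B1 * B2 + (A1 ^ 2 - 2 * A2) * B2 + A2 * B1 ^ 2
        - A1 * A2 * B1 + A2 ^ 2)"

definition defined_over_Q :: "cpoly \<Rightarrow> bool" where
  "defined_over_Q P \<longleftrightarrow>
     (\<exists>s::complex. \<exists>Q::cpoly. s \<noteq> 0 \<and> (\<forall>m. Poly_Mapping.lookup Q m \<in> \<rat>) \<and> P = PConst s * Q)"

end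

theory Submission
  imports Defs
begin

definition M :: "nat \<Rightarrow> nat \<Rightarrow> nat \<Rightarrow> nat \<Rightarrow> (nat \<Rightarrow>\<^sub>0 nat)" where
  "M a b c d = Poly_Mapping.single 0 a + Poly_Mapping.single 1 b + Poly_Mapping.single 2 c + Poly_Mapping.single 3 d"

lemma M_add: "M a b c d + M a' b' c' d' = M (a+a') (b+b') (c+c') (d+d')"
  unfolding M_def by (simp add: Poly_Mapping.single_add algebra_simps)

lemma M_lookup: "Poly_Mapping.lookup (M a b c d) 0 = a" "Poly_Mapping.lookup (M a b c d) 1 = b"
  "Poly_Mapping.lookup (M a b c d) 2 = c" "Poly_Mapping.lookup (M a b c d) 3 = d"
  unfolding M_def by (simp_all add: lookup_add lookup_single)

lemma M_eq: "M a b c d = M a' b' c' d' \<longleftrightarrow> a = a' \<and> b = b' \<and> c = c' \<and> d = d'"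
  by (metis M_lookup)

lemma PVar_M: "PVar 0 = Poly_Mapping.single (M 1 0 0 0) 1" "PVar 1 = Poly_Mapping.single (M 0 1 0 0) 1"
  "PVar 2 = Poly_Mapping.single (M 0 0 1 0) 1" "PVar 3 = Poly_Mapping.single (M 0 0 0 1) 1"
  unfolding PVar_def M_def by simp_all

lemma PConst_M: "PConst c = Poly_Mapping.single (M 0 0 0 0) c"
  unfolding PConst_def M_def by simp

definition Egen :: "complex \<Rightarrow> complex \<Rightarrow> complex \<Rightarrow> complex \<Rightarrow> complex \<Rightarrow> cpoly" where
  "Egen x p q r s =
    (let a = PVar 0; b = PVar 1; c = PVar 2; d = PVar 3;
         A1 = PConst p * a + PConst q * b;
         A2 = PConst x * a * b;
         B1 = PConst r * c + PConst s * d;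
         B2 = PConst x * c * d
     in B2 ^ 2 - A1 * B1 * B2 + (A1 ^ 2 - 2 * A2) * B2 + A2 * B1 ^ 2
        - A1 * A2 * B1 + A2 ^ 2)"

abbreviation (input) sg where "sg \<equiv> Poly_Mapping.single"

definition Ecan :: "complex \<Rightarrow> complex \<Rightarrow> complex \<Rightarrow> complex \<Rightarrow> complex \<Rightarrow> cpoly" where
  "Ecan x p q r s =
     sg (M 0 0 2 2) (x*x) + sg (M 2 2 0 0) (x*x)
   + sg (M 1 0 2 1) (x*(-(p*r))) + sg (M 0 1 2 1) (x*(-(q*r)))
   + sg (M 1 0 1 2) (x*(-(p*s))) + sg (M 0 1 1 2) (x*(-(q*s)))
   + sg (M 2 0 1 1) (x*(p*p)) + sg (M 0 2 1 1) (x*(q*q))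
   + sg (M 1 1 1 1) (x*(2*(p*q) - 2*x + 2*(r*s)))
   + sg (M 1 1 2 0) (x*(r*r)) + sg (M 1 1 0 2) (x*(s*s))
   + sg (M 2 1 1 0) (x*(-(p*r))) + sg (M 2 1 0 1) (x*(-(p*s)))
   + sg (M 1 2 1 0) (x*(-(q*r))) + sg (M 1 2 0 1) (x*(-(q*s)))"


lemma two_single: "(2::cpoly) * sg k c = sg k (2*c)"
proof -
  have "(2::cpoly) = sg 0 2" by simp
  then have "(2::cpoly) * sg k c = sg 0 2 * sg k c" by simp
  also have "\<dots> = sg k (2*c)" by (simp only: mult_single add_0)
  finally show ?thesis .
qed

lemma Egen_Ecan: "Egen x p q r s = Ecan x p q r s"
proof (rule poly_mapping_eqI)
  fix m
  let ?K = "{M 0 0 2 2, M 2 2 0 0, M 1 0 2 1, M 0 1 2 1, M 1 0 1 2, M 0 1 1 2, M 2 0 1 1, M 0 2 1 1,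
     M 1 1 1 1, M 1 1 2 0, M 1 1 0 2, M 2 1 1 0, M 2 1 0 1, M 1 2 1 0, M 1 2 0 1}"
  have E: "Egen x p q r s = Egen x p q r s" ..
  note X = Egen_def Let_def PVar_M PConst_M power2_eq_square Ecan_def
  show "Poly_Mapping.lookup (Egen x p q r s) m = Poly_Mapping.lookup (Ecan x p q r s) m"
  proof (cases "m \<in> ?K")
    case True
    then show ?thesis
      unfolding X
      apply (simp only: insert_iff empty_iff simp_thms)
      apply (elim disjE)
      apply (simp_all add: ring_distribs mult_single M_add lookup_add lookup_minus lookup_single M_eq two_single)
      done
  next
    case False
    then have "M 0 0 2 2 \<noteq> m" "M 2 2 0 0 \<noteq> m" "M 1 0 2 1 \<noteq> m" "M 0 1 2 1 \<noteq> m" "M 1 0 1 2 \<noteq> m"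
      "M 0 1 1 2 \<noteq> m" "M 2 0 1 1 \<noteq> m" "M 0 2 1 1 \<noteq> m" "M 1 1 1 1 \<noteq> m" "M 1 1 2 0 \<noteq> m"
      "M 1 1 0 2 \<noteq> m" "M 2 1 1 0 \<noteq> m" "M 2 1 0 1 \<noteq> m" "M 1 2 1 0 \<noteq> m" "M 1 2 0 1 \<noteq> m"
      by auto
    then show ?thesis
      unfolding X
      by (simp add: ring_distribs mult_single M_add lookup_add lookup_minus lookup_single numeral_2_eq_2 two_single)
  qed
qed

lemma den_sq: "snd (quotient_of (r*r - 2)) = snd (quotient_of r) ^ 2"
proof -
  obtain a b where ab: "quotient_of r = (a, b)" by (cases "quotient_of r")
  have b0: "b > 0" using ab quotient_of_denom_pos by blast
  have cop: "coprime a b" using ab quotient_of_coprime by blast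
  have r: "r = Fract a b" using ab by (metis Fract_quotient_of fst_conv snd_conv)
  have two: "(2::rat) = Fract (2*(b*b)) (b*b)"
  proof -
    have "(2::rat) = Fract 2 1" by (metis Fract_of_int_eq of_int_numeral)
    also have "\<dots> = Fract (2*(b*b)) (b*b)" using b0 by (simp add: eq_rat)
    finally show ?thesis .
  qed
  have "r*r - 2 = Fract (a*a) (b*b) - Fract (2*(b*b)) (b*b)"
    using b0 by (subst two) (simp add: r mult_rat)
  also have "\<dots> = Fract (a*a - 2*b*b) (b*b)"
    using b0 by (simp add: diff_rat eq_rat algebra_simps)
  finally have "r*r - 2 = Fract (a*a - 2*b*b) (b*b)" .
  moreover have "coprime (a*a - 2*b*b) (b*b)"
  proof -
    have "coprime (a*a) b" using cop by simp
    have e: "a*a - 2*b*b = (-2*b)*b + a*a" by (simp add: algebra_simps)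
    have "gcd (a*a - 2*b*b) b = 1"
      unfolding e using \<open>coprime (a*a) b\<close>
      by (simp only: gcd.commute[of _ b] gcd_add_mult coprime_iff_gcd_eq_1 gcd.commute)
    then have "coprime (a*a - 2*b*b) b" by (simp add: coprime_iff_gcd_eq_1)
    then show ?thesis by simp
  qed
  ultimately have "quotient_of (r*r-2) = (a*a - 2*b*b, b*b)"
    using b0 by (simp add: quotient_of_Fract)
  then show ?thesis using ab by (simp add: power2_eq_square)
qed

lemma pow_mod_N: fixes u :: complex assumes "u ^ N = 1" shows "u ^ n = u ^ (n mod N)"
proof -
  have "u ^ n = u ^ (N * (n div N) + n mod N)" by simp
  also have "\<dots> = (u ^ N) ^ (n div N) * u ^ (n mod N)" by (simp only: power_add power_mult)
  finally show ?thesis using assms by simp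
qed

lemma trace_int:
  fixes u :: complex
  assumes N: "u ^ N = 1" "N > 0" and rat: "u + inverse u \<in> \<rat>"
  shows "u + inverse u \<in> {-2, -1, 0, 1, 2}"
proof -
  have u0: "u \<noteq> 0" using N by (auto simp: power_0_left)
  obtain r0 where r0: "of_rat r0 = u + inverse u" using rat by (auto elim: Rats_cases)
  define R where "R k = ((\<lambda>r. r*r - 2) ^^ k) r0" for k
  have RS: "R (Suc k) = R k * R k - 2" for k by (simp add: R_def)
  have Rv: "of_rat (R k) = u ^ (2^k) + inverse (u ^ (2^k))" for k
  proof (induction k)
    case 0 then show ?case by (simp add: R_def r0)
  next
    case (Suc k)
    have "of_rat (R (Suc k)) = (u ^ (2^k) + inverse (u ^ (2^k))) * (u ^ (2^k) + inverse (u ^ (2^k))) - 2"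
      by (simp add: RS Suc of_rat_mult of_rat_diff)
    also have "\<dots> = u ^ (2^k) * u ^ (2^k) + inverse (u ^ (2^k) * u ^ (2^k))"
      using u0 by (simp add: field_simps)
    also have "u ^ (2^k) * u ^ (2^k) = u ^ (2 ^ Suc k)"
      by (simp add: power_add[symmetric] mult_2)
    finally show ?case .
  qed
  define T where "T = (\<lambda>j. u ^ j + inverse (u ^ j)) ` {..<N}"
  have "range R \<subseteq> of_rat -` T"
  proof
    fix r assume "r \<in> range R"
    then obtain k where k: "r = R k" by auto
    have "u ^ (2^k) = u ^ (2^k mod N)" by (rule pow_mod_N[OF N(1)])
    then have "of_rat r \<in> T" unfolding T_def k Rv using N(2) by auto
    then show "r \<in> of_rat -` T" by simp
  qed
  moreover have "finite (of_rat -` T :: rat set)"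
    unfolding T_def by (rule finite_vimageI) (auto simp: inj_on_def)
  ultimately have fin: "finite (range R)" by (rule finite_subset)
  define D where "D k = snd (quotient_of (R k))" for k
  have DS: "D k = D 0 ^ (2^k)" for k
  proof (induction k)
    case 0 then show ?case by simp
  next
    case (Suc k)
    have "D (Suc k) = D k ^ 2" unfolding D_def RS by (rule den_sq)
    then show ?case using Suc by (simp add: power_mult[symmetric] mult.commute)
  qed
  have D0: "D 0 = 1"
  proof (rule ccontr)
    assume "D 0 \<noteq> 1"
    moreover have "D 0 > 0" unfolding D_def by (rule quotient_of_denom_pos')
    ultimately have D2: "D 0 \<ge> 2" by simp
    have finD: "finite (D ` UNIV)"
    proof -
      have "D ` UNIV = (\<lambda>r. snd (quotient_of r)) ` range R" unfolding D_def by auto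
      then show ?thesis using fin by simp
    qed
    define B where "B = Max (D ` UNIV)"
    have "D k \<le> B" for k unfolding B_def using finD by simp
    have "int k < 2 ^ (2 ^ k)" for k
    proof -
      have "k < 2 ^ k" by (rule less_exp)
      also have "(2::nat) ^ k < 2 ^ (2 ^ k)" using less_exp by simp
      finally have "k < (2::nat) ^ (2 ^ k)" .
      then show ?thesis by (metis of_nat_less_iff of_nat_numeral of_nat_power)
    qed
    have "int (nat B) < D (nat B)"
    proof -
      have "int (nat B) < 2 ^ (2 ^ nat B)" by fact
      also have "\<dots> \<le> D 0 ^ (2 ^ nat B)" using D2 by (intro power_mono) auto
      finally show ?thesis by (simp only: DS[of "nat B"])
    qed
    moreover have "D (nat B) \<le> B" by fact
    ultimately show False by linarith
  qed
  obtain a where a: "quotient_of r0 = (a, 1)"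
    using D0 unfolding D_def R_def by (metis funpow_0 prod.collapse)
  have "r0 = of_int a" using a by (metis Fract_of_int_eq Fract_quotient_of fst_conv snd_conv)
  then have ua: "u + inverse u = of_int a" using r0 by simp
  have nu: "norm u = 1"
  proof -
    have "norm u ^ N = 1" using N(1) by (metis norm_one norm_power)
    then show ?thesis using N(2) using power_eq_iff_eq_base[of N "norm u" 1] by simp
  qed
  have "norm (u + inverse u) \<le> 2"
  proof -
    have "norm (u + inverse u) \<le> norm u + norm (inverse u)" by (rule norm_triangle_ineq)
    also have "\<dots> = 2" using nu by (simp add: norm_inverse)
    finally show ?thesis .
  qed
  then have "\<bar>real_of_int a\<bar> \<le> 2" using ua by (simp only: norm_of_int)
  then have "\<bar>a\<bar> \<le> 2" by linarith
  then have "a \<in> {-2, -1, 0, 1, 2}" by auto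
  then show ?thesis using ua by auto
qed


lemma E_star_Ecan:
  "E_star x y z = Ecan x ((y-x)/(y-1)) ((x*y-1)/(y-1)) ((z-x)/(z-1)) ((x*z-1)/(z-1))"
  unfolding Egen_Ecan[symmetric] E_star_def Egen_def by (rule refl)

lemma lookup_PConst_mult: "Poly_Mapping.lookup (PConst s * P) m = s * Poly_Mapping.lookup P m"
  unfolding PConst_def mult_map_scale_conv_mult[symmetric]
  by (simp add: Poly_Mapping.map.rep_eq when_def)

lemma PConst_mult: "PConst a * PConst b = PConst (a*b)"
  unfolding PConst_def by (simp add: mult_single)

lemma PConst_1: "PConst 1 = 1"
  unfolding PConst_def by simp

lemma Ecan_lookups:
  "Poly_Mapping.lookup (Ecan x p q r s) (M 0 0 2 2) = x*x"
  "Poly_Mapping.lookup (Ecan x p q r s) (M 2 0 1 1) = x*(p*p)"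
  "Poly_Mapping.lookup (Ecan x p q r s) (M 0 2 1 1) = x*(q*q)"
  "Poly_Mapping.lookup (Ecan x p q r s) (M 1 1 2 0) = x*(r*r)"
  "Poly_Mapping.lookup (Ecan x p q r s) (M 1 1 0 2) = x*(s*s)"
  "Poly_Mapping.lookup (Ecan x p q r s) (M 1 0 2 1) = x*(-(p*r))"
  "Poly_Mapping.lookup (Ecan x p q r s) (M 1 1 1 1) = x*(2*(p*q) - 2*x + 2*(r*s))"
  by (simp_all add: Ecan_def lookup_add lookup_single M_eq)

lemma when_Rats: "(a::complex) \<in> \<rat> \<Longrightarrow> (a when P) \<in> \<rat>"
  by (cases P) auto

lemma when_div: "((a::complex) when P) / d = (a / d when P)"
  by (cases P) auto

lemma Rats_add_div: "(a::complex)/d \<in> \<rat> \<Longrightarrow> b/d \<in> \<rat> \<Longrightarrow> (a+b)/d \<in> \<rat>"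
  by (simp add: add_divide_distrib)

lemma when_div_Rats: "(a::complex)/d \<in> \<rat> \<Longrightarrow> (a when P)/d \<in> \<rat>"
  by (cases P) auto

lemma xdiv: "(x::complex) \<noteq> 0 \<Longrightarrow> (x * a) / (x * x) = a / x"
  by (simp add: field_simps)

lemma Ecan_ratQ:
  assumes x0: "x \<noteq> 0"
    and h: "p*p/x \<in> \<rat>" "q*q/x \<in> \<rat>" "r*r/x \<in> \<rat>" "s*s/x \<in> \<rat>"
      "p*r/x \<in> \<rat>" "p*s/x \<in> \<rat>" "q*r/x \<in> \<rat>" "q*s/x \<in> \<rat>" "p*q/x \<in> \<rat>" "r*s/x \<in> \<rat>"
  shows "Poly_Mapping.lookup (Ecan x p q r s) m / (x*x) \<in> \<rat>"
proof -
  have neg: "-(a/x) \<in> \<rat>" if "a/x \<in> \<rat>" for a using that by simp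
  have mid: "(2*(p*q) - 2*x + 2*(r*s))/x \<in> \<rat>"
  proof -
    have "(2*(p*q) - 2*x + 2*(r*s))/x = 2*(p*q/x) - 2 + 2*(r*s/x)"
      using x0 by (simp add: field_simps)
    then show ?thesis using h by (simp only:) (intro Rats_add Rats_diff Rats_mult, simp_all)
  qed
  have one: "(x*x)/(x*x) \<in> \<rat>" using x0 by simp
  show ?thesis
    unfolding Ecan_def lookup_add lookup_single
    using x0 h mid one
    by (intro Rats_add_div when_div_Rats) (simp_all add: xdiv minus_divide_left[symmetric])
qed

lemma pq_form:
  assumes "(y::complex) \<noteq> 1"
  shows "(y-x)/(y-1) = ((x+1)+(1-x)*((y+1)/(y-1)))/2"
    and "(x*y-1)/(y-1) = ((x+1)-(1-x)*((y+1)/(y-1)))/2"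
  using assms by (simp_all add: field_simps) (algebra+)?

lemma idents:
  fixes x w w2 c v P Q R S :: complex
  assumes x0: "x \<noteq> 0"
    and P: "P = ((x+1)+(1-x)*w)/2" and Q: "Q = ((x+1)-(1-x)*w)/2"
    and R: "R = ((x+1)+(1-x)*w2)/2" and S: "S = ((x+1)-(1-x)*w2)/2"
    and c: "c = x + inverse x" and v: "v = x - inverse x"
  shows "4*(P*P/x) = (c+2) - 2*(v*w) + (c-2)*(w*w)"
    and "4*(Q*Q/x) = (c+2) + 2*(v*w) + (c-2)*(w*w)"
    and "4*(R*R/x) = (c+2) - 2*(v*w2) + (c-2)*(w2*w2)"
    and "4*(S*S/x) = (c+2) + 2*(v*w2) + (c-2)*(w2*w2)"
    and "4*(P*Q/x) = (c+2) - (c-2)*(w*w)"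
    and "4*(R*S/x) = (c+2) - (c-2)*(w2*w2)"
    and "4*(P*R/x) = (c+2) - (v*w + v*w2) + (c-2)*(w*w2)"
    and "4*(P*S/x) = (c+2) - (v*w - v*w2) - (c-2)*(w*w2)"
    and "4*(Q*R/x) = (c+2) + (v*w - v*w2) - (c-2)*(w*w2)"
    and "4*(Q*S/x) = (c+2) + (v*w + v*w2) + (c-2)*(w*w2)"
  using x0 unfolding P Q R S c v by (simp_all add: field_simps) (algebra+)?


lemma mod3_sq: assumes "((m::int)*m) mod 3 = 0" shows "m mod 3 = 0"
proof -
  have "(m*m) mod 3 = ((m mod 3)*(m mod 3)) mod 3" by (simp add: mod_mult_eq)
  moreover have "m mod 3 = 0 \<or> m mod 3 = 1 \<or> m mod 3 = 2" by auto
  ultimately show ?thesis using assms by auto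
qed

lemma rat_sq3: "(a::rat) * a \<noteq> 3"
proof
  assume h: "a * a = 3"
  obtain m n where mn: "quotient_of a = (m, n)" by (cases "quotient_of a")
  have n0: "n > 0" using mn quotient_of_denom_pos by blast
  have cop: "coprime m n" using mn quotient_of_coprime by blast
  have a: "a = Fract m n" using mn by (metis Fract_quotient_of fst_conv snd_conv)
  have "Fract (m*m) (n*n) = Fract 3 1"
    using h by (simp add: a mult_rat) (metis Fract_of_int_eq of_int_numeral)
  then have e: "m*m = 3*(n*n)" using n0 by (simp add: eq_rat)
  then have "(m*m) mod 3 = 0" by simp
  then have "m mod 3 = 0" by (rule mod3_sq)
  then obtain k where k: "m = 3*k" by auto
  then have "n*n = 3*(k*k)" using e by simp
  then have "(n*n) mod 3 = 0" by simp
  then have "n mod 3 = 0" by (rule mod3_sq)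
  then have "3 dvd n" by auto
  moreover have "3 dvd m" using k by simp
  ultimately have "is_unit (3::int)" using cop coprime_common_divisor by blast
  then show False by simp
qed

lemma nosq:
  assumes "(V::complex) \<in> \<rat>"
  shows "V*V \<noteq> 3" "V*V \<noteq> 12" "V*V \<noteq> 4/3" "V*V \<noteq> 1/3"
proof -
  obtain a where a: "V = of_rat a" using assms by (auto elim: Rats_cases)
  show "V*V \<noteq> 3"
  proof
    assume "V*V = 3"
    then have "of_rat (a*a) = (of_rat 3 :: complex)" by (simp add: a of_rat_mult)
    then show False using rat_sq3[of a] by (simp only: of_rat_eq_iff)
  qed
  show "V*V \<noteq> 12"
  proof
    assume "V*V = 12"
    then have "of_rat ((a/2)*(a/2)) = (of_rat 3 :: complex)" by (simp add: a of_rat_mult of_rat_divide)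
    then show False using rat_sq3[of "a/2"] by (simp only: of_rat_eq_iff)
  qed
  show "V*V \<noteq> 4/3"
  proof
    assume "V*V = 4/3"
    then have "of_rat ((3*a/2)*(3*a/2)) = (of_rat 3 :: complex)"
      by (simp add: a of_rat_mult of_rat_divide) (simp add: field_simps)
    then show False using rat_sq3[of "3*a/2"] by (simp only: of_rat_eq_iff)
  qed
  show "V*V \<noteq> 1/3"
  proof
    assume "V*V = 1/3"
    then have "of_rat ((3*a)*(3*a)) = (of_rat 3 :: complex)"
      by (simp add: a of_rat_mult) (simp add: field_simps)
    then show False using rat_sq3[of "3*a"] by (simp only: of_rat_eq_iff)
  qed
qed

lemma sq_rat:
  assumes "(V::complex)*V = k" "k \<in> {0, 1, 4, 9, 1/9}"
  shows "V \<in> \<rat>"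
proof -
  have "\<exists>b::rat. k = of_rat b * of_rat b"
  proof -
    have "k = of_rat 0 * of_rat 0 \<or> k = of_rat 1 * of_rat 1 \<or> k = of_rat 2 * of_rat 2 \<or>
          k = of_rat 3 * of_rat 3 \<or> k = of_rat (1/3) * of_rat (1/3)"
      using assms(2) by (auto simp: of_rat_divide)
    then show ?thesis by blast
  qed
  then obtain b :: rat where b: "k = of_rat b * of_rat b" by blast
  have "(V - of_rat b) * (V + of_rat b) = 0" using assms(1) b by (simp add: algebra_simps)
  then have "V - of_rat b = 0 \<or> V + of_rat b = 0" by simp
  then have "V = of_rat b \<or> V = - of_rat b" by (metis add_eq_0_iff2 right_minus_eq)
  then show ?thesis by (auto simp: of_rat_minus[symmetric])
qed

lemma final_case:
  fixes c ty tz V1 V2 V3 :: complex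
  assumes c: "c \<in> {-2,-1,0,1}" and y: "ty \<in> {-2,-1,0,1}" and z: "tz \<in> {-2,-1,0,1}"
    and h1: "V1 \<in> \<rat>" "V1*V1 = (c*c-4)*((ty+2)/(ty-2))"
    and h2: "V2 \<in> \<rat>" "V2*V2 = (c*c-4)*((tz+2)/(tz-2))"
    and h3: "V3 \<in> \<rat>" "V3*V3 = ((ty+2)/(ty-2))*((tz+2)/(tz-2))"
  shows "(c \<in> {-2,0} \<and> ty \<in> {-2,0} \<and> tz \<in> {-2,0}) \<or> (c \<in> {-2,-1,1} \<and> ty \<in> {-2,-1,1} \<and> tz \<in> {-2,-1,1})"
proof -
  note n1 = nosq[OF h1(1)] and n2 = nosq[OF h2(1)] and n3 = nosq[OF h3(1)]
  have a1: "\<not> (c = 0 \<and> (ty = 1 \<or> ty = -1))" using h1(2) n1 by auto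
  have a2: "\<not> (ty = 0 \<and> (c = 1 \<or> c = -1))" using h1(2) n1 by auto
  have a3: "\<not> (c = 0 \<and> (tz = 1 \<or> tz = -1))" using h2(2) n2 by auto
  have a4: "\<not> (tz = 0 \<and> (c = 1 \<or> c = -1))" using h2(2) n2 by auto
  have a5: "\<not> (ty = 0 \<and> (tz = 1 \<or> tz = -1))" using h3(2) n3 by auto
  have a6: "\<not> (tz = 0 \<and> (ty = 1 \<or> ty = -1))" using h3(2) n3 by auto
  show ?thesis using c y z a1 a2 a3 a4 a5 a6 by blast
qed

lemma if_case:
  fixes c ty tz V1 V2 V3 :: complex
  assumes H: "(c \<in> {-2,0} \<and> ty \<in> {-2,0} \<and> tz \<in> {-2,0}) \<or> (c \<in> {-2,-1,1} \<and> ty \<in> {-2,-1,1} \<and> tz \<in> {-2,-1,1})"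
    and h: "V1*V1 = (c*c-4)*((ty+2)/(ty-2))"
    "V2*V2 = (c*c-4)*((tz+2)/(tz-2))"
    "V3*V3 = ((ty+2)/(ty-2))*((tz+2)/(tz-2))"
  shows "V1 \<in> \<rat>" "V2 \<in> \<rat>" "V3 \<in> \<rat>"
proof -
  have K: "(c*c-4)*((ty+2)/(ty-2)) \<in> {0,1,4,9,1/9} \<and> (c*c-4)*((tz+2)/(tz-2)) \<in> {0,1,4,9,1/9} \<and>
       ((ty+2)/(ty-2))*((tz+2)/(tz-2)) \<in> {0,1,4,9,1/9}"
    using H
  proof
    assume A: "c \<in> {-2,0} \<and> ty \<in> {-2,0} \<and> tz \<in> {-2,0}"
    have c4: "c*c-4 \<in> {0,-4}" using A by auto
    have wy: "(ty+2)/(ty-2) \<in> {0,-1}" using A by auto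
    have wz: "(tz+2)/(tz-2) \<in> {0,-1}" using A by auto
    have pr: "a*b \<in> {0,1,4,9,1/9}" if "a \<in> {0,-4::complex}" "b \<in> {0,-1}" for a b using that by auto
    have pr2: "a*b \<in> {0,1,4,9,1/9}" if "a \<in> {0,-1::complex}" "b \<in> {0,-1}" for a b using that by auto
    show ?thesis using pr[OF c4 wy] pr[OF c4 wz] pr2[OF wy wz] by blast
  next
    assume B: "c \<in> {-2,-1,1} \<and> ty \<in> {-2,-1,1} \<and> tz \<in> {-2,-1,1}"
    have c4: "c*c-4 \<in> {0,-3}" using B by auto
    have wy: "(ty+2)/(ty-2) \<in> {0,-3,-1/3}" using B by auto
    have wz: "(tz+2)/(tz-2) \<in> {0,-3,-1/3}" using B by auto
    have pr: "a*b \<in> {0,1,4,9,1/9}" if "a \<in> {0,-3::complex}" "b \<in> {0,-3,-1/3}" for a b using that by auto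
    have pr2: "a*b \<in> {0,1,4,9,1/9}" if "a \<in> {0,-3,-1/3::complex}" "b \<in> {0,-3,-1/3}" for a b using that by auto
    show ?thesis using pr[OF c4 wy] pr[OF c4 wz] pr2[OF wy wz] by blast
  qed
  then show "V1 \<in> \<rat>" "V2 \<in> \<rat>" "V3 \<in> \<rat>" using h sq_rat by blast+
qed

lemma t_eq: "(x::complex) \<noteq> 0 \<Longrightarrow> x + inverse x = t \<longleftrightarrow> x*x - t*x + 1 = 0"
  by (auto simp: field_simps)

lemma t_to_pow:
  fixes x :: complex
  assumes x0: "x \<noteq> 0"
  shows "x + inverse x \<in> {-2, 0} \<Longrightarrow> x^4 = 1"
    and "x + inverse x \<in> {-2, -1, 1} \<Longrightarrow> x^6 = 1"
proof -
  have m2: "x = -1" if "x + inverse x = -2"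
  proof -
    have "x*x + 2*x + 1 = 0" using t_eq[OF x0, of "-2"] that by simp
    then have "(x+1)*(x+1) = 0" by (simp add: algebra_simps)
    then show ?thesis by (simp add: add_eq_0_iff2)
  qed
  have z: "x*x = -1" if "x + inverse x = 0"
    using t_eq[OF x0, of 0] that by (simp add: add_eq_0_iff2)
  have m1: "x^6 = 1" if "x + inverse x = -1"
  proof -
    have "x*x + x + 1 = 0" using t_eq[OF x0, of "-1"] that by simp
    then show ?thesis by algebra
  qed
  have p1: "x^6 = 1" if "x + inverse x = 1"
  proof -
    have "x*x - x + 1 = 0" using t_eq[OF x0, of "1"] that by simp
    then show ?thesis by algebra
  qed
  show "x + inverse x \<in> {-2, 0} \<Longrightarrow> x^4 = 1"
  proof -
    assume "x + inverse x \<in> {-2, 0}"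
    then consider "x + inverse x = -2" | "x + inverse x = 0" by auto
    then show "x^4 = 1"
    proof cases
      case 1 then show ?thesis using m2 by simp
    next
      case 2 then have "x*x = -1" by (rule z)
      then show ?thesis by algebra
    qed
  qed
  show "x + inverse x \<in> {-2, -1, 1} \<Longrightarrow> x^6 = 1"
    using m2 m1 p1 by auto
qed

lemma pow_to_t:
  fixes x :: complex
  assumes x0: "x \<noteq> 0" and x1: "x \<noteq> 1"
  shows "x^4 = 1 \<Longrightarrow> x + inverse x \<in> {-2, 0}"
    and "x^6 = 1 \<Longrightarrow> x + inverse x \<in> {-2, -1, 1}"
proof -
  have x1': "x - 1 \<noteq> 0" using x1 by simp
  show "x^4 = 1 \<Longrightarrow> x + inverse x \<in> {-2, 0}"
  proof -
    assume h: "x^4 = 1"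
    have "(x - 1) * ((x + 1) * (x*x + 1)) = 0" using h by algebra
    then have "x + 1 = 0 \<or> x*x + 1 = 0" using x1' by simp
    then have "x = -1 \<or> x*x - 0*x + 1 = 0" by (auto simp: add_eq_0_iff2)
    then show ?thesis using t_eq[OF x0, of 0] by auto
  qed
  show "x^6 = 1 \<Longrightarrow> x + inverse x \<in> {-2, -1, 1}"
  proof -
    assume h: "x^6 = 1"
    have "(x - 1) * ((x + 1) * (x*x - (-1)*x + 1) * (x*x - 1*x + 1)) = 0" using h by algebra
    then have "x + 1 = 0 \<or> x*x - (-1)*x + 1 = 0 \<or> x*x - 1*x + 1 = 0" using x1' by simp
    then have "x = -1 \<or> x*x - (-1)*x + 1 = 0 \<or> x*x - 1*x + 1 = 0" by (auto simp: add_eq_0_iff2)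
    then show ?thesis using t_eq[OF x0, of "-1"] t_eq[OF x0, of 1] by auto
  qed
qed

lemma t_ne2: "(x::complex) \<noteq> 0 \<Longrightarrow> x \<noteq> 1 \<Longrightarrow> x + inverse x \<noteq> 2"
proof
  assume x0: "x \<noteq> 0" and x1: "x \<noteq> 1" and h: "x + inverse x = 2"
  then have "x*x - 2*x + 1 = 0" by (simp add: field_simps)
  then have "(x-1)*(x-1) = 0" by (simp add: algebra_simps)
  then show False using x1 by simp
qed

lemma y_idents:
  fixes y :: complex assumes y0: "y \<noteq> 0" and y1: "y \<noteq> 1"
  shows "((y+1)/(y-1))*((y+1)/(y-1)) = ((y + inverse y)+2)/((y + inverse y)-2)"
    and "((y+1)/(y-1))*((y+1)/(y-1)) \<noteq> 1"
    and "y + inverse y = 2*(((y+1)/(y-1))*((y+1)/(y-1))+1)/(((y+1)/(y-1))*((y+1)/(y-1))-1)"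
proof -
  have y1': "y - 1 \<noteq> 0" using y1 by simp
  have t2: "y + inverse y - 2 \<noteq> 0" using t_ne2[OF y0 y1] by simp
  have e: "y + inverse y - 2 = (y-1)*(y-1)/y" using y0 by (simp add: field_simps) (algebra?)
  show 1: "((y+1)/(y-1))*((y+1)/(y-1)) = ((y + inverse y)+2)/((y + inverse y)-2)"
  proof -
    have e1: "y + inverse y + 2 = (y+1)*(y+1)/y" using y0 by (simp add: field_simps) (algebra?)
    have l: "((y+1)/(y-1))*((y+1)/(y-1)) = ((y+1)*(y+1)) / ((y-1)*(y-1))" by (simp add: times_divide_times_eq)
    have r: "(y+1)*(y+1)/y / ((y-1)*(y-1)/y) = ((y+1)*(y+1)) / ((y-1)*(y-1))"
      using y0 by (metis divide_divide_times_eq mult.commute nonzero_mult_divide_mult_cancel_left)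
    show ?thesis unfolding e1 e l r ..
  qed
  have g1: "(t+2)/(t-2) \<noteq> 1" if "t - 2 \<noteq> 0" for t :: complex
    using that by (simp add: field_simps)
  have g2: "t = 2*((t+2)/(t-2)+1)/((t+2)/(t-2)-1)" if "t - 2 \<noteq> 0" for t :: complex
    using that by (simp add: field_simps)
  show "((y+1)/(y-1))*((y+1)/(y-1)) \<noteq> 1" unfolding 1 using g1 t2 by simp
  show "y + inverse y = 2*(((y+1)/(y-1))*((y+1)/(y-1))+1)/(((y+1)/(y-1))*((y+1)/(y-1))-1)"
    unfolding 1 by (rule g2[OF t2])
qed

lemma x_ident: "(x::complex) \<noteq> 0 \<Longrightarrow> (x - inverse x)*(x - inverse x) = (x + inverse x)*(x + inverse x) - 4"
  by (simp add: field_simps) (algebra?)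

lemma lin_solve:
  fixes A B C D E F G c vw vw2 ww ww2 w2w2 :: complex
  assumes e: "4*A = (c+2) - 2*vw + (c-2)*ww" "4*B = (c+2) + 2*vw + (c-2)*ww"
    "4*C = (c+2) - 2*vw2 + (c-2)*w2w2" "4*D = (c+2) + 2*vw2 + (c-2)*w2w2"
    "4*E = (c+2) - (c-2)*ww" "4*F = (c+2) - (c-2)*w2w2"
    "4*G = (c+2) - (vw + vw2) + (c-2)*ww2"
    and c2: "c \<noteq> 2"
    and r: "A \<in> \<rat>" "B \<in> \<rat>" "C \<in> \<rat>" "D \<in> \<rat>" "G \<in> \<rat>" "E + F \<in> \<rat>"
  shows "c \<in> \<rat>" "vw \<in> \<rat>" "vw2 \<in> \<rat>" "ww \<in> \<rat>" "w2w2 \<in> \<rat>" "ww2 \<in> \<rat>"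
proof -
  have c2': "c - 2 \<noteq> 0" using c2 by simp
  have "c = (A+B+C+D)/2 + (E+F) - 2" using e by algebra
  then show cQ: "c \<in> \<rat>" using r by simp
  have "vw = B - A" using e by algebra
  then show vQ: "vw \<in> \<rat>" using r by simp
  have "vw2 = D - C" using e by algebra
  then show v2Q: "vw2 \<in> \<rat>" using r by simp
  have "(c-2)*ww = 2*(A+B) - (c+2)" using e by algebra
  then have "ww = (2*(A+B) - (c+2))/(c-2)" using c2' by (simp add: field_simps)
  then show "ww \<in> \<rat>" using r cQ by simp
  have "(c-2)*w2w2 = 2*(C+D) - (c+2)" using e by algebra
  then have "w2w2 = (2*(C+D) - (c+2))/(c-2)" using c2' by (simp add: field_simps)
  then show "w2w2 \<in> \<rat>" using r cQ by simp
  have "(c-2)*ww2 = 4*G - (c+2) + (vw + vw2)" using e by algebra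
  then have "ww2 = (4*G - (c+2) + (vw + vw2))/(c-2)" using c2' by (simp add: field_simps)
  then show "ww2 \<in> \<rat>" using r cQ vQ v2Q by simp
qed

lemma quarter_Rats: "4 * (X::complex) = R \<Longrightarrow> R \<in> \<rat> \<Longrightarrow> X \<in> \<rat>"
proof -
  assume "4 * X = R" "R \<in> \<rat>"
  then have X: "X = R / 4" by (auto simp: field_simps)
  have "R / 4 \<in> \<rat>" using \<open>R \<in> \<rat>\<close> by simp
  then show "X \<in> \<rat>" by (subst X)
qed

lemma rou_facts:
  assumes "root_of_unity u"
  obtains N where "N > 0" "u ^ N = 1" "u \<noteq> 0"
  using assms unfolding root_of_unity_def by (metis power_0_left zero_neq_one less_not_refl)

theorem propositionA3:
  fixes x y z :: complex
  assumes "root_of_unity x" "root_of_unity y" "root_of_unity z"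
    and "x \<noteq> 1" "y \<noteq> 1" "z \<noteq> 1"
  shows "defined_over_Q (E_star x y z) \<longleftrightarrow>
           ((x ^ 4 = 1 \<and> y ^ 4 = 1 \<and> z ^ 4 = 1) \<or> (x ^ 6 = 1 \<and> y ^ 6 = 1 \<and> z ^ 6 = 1))"
proof -
  obtain Nx where Nx: "Nx > 0" "x ^ Nx = 1" and x0: "x \<noteq> 0" using assms(1) by (rule rou_facts)
  obtain Ny where Ny: "Ny > 0" "y ^ Ny = 1" and y0: "y \<noteq> 0" using assms(2) by (rule rou_facts)
  obtain Nz where Nz: "Nz > 0" "z ^ Nz = 1" and z0: "z \<noteq> 0" using assms(3) by (rule rou_facts)
  have x1: "x \<noteq> 1" and y1: "y \<noteq> 1" and z1: "z \<noteq> 1" using assms by auto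
  define p where "p = (y-x)/(y-1)"
  define q where "q = (x*y-1)/(y-1)"
  define r where "r = (z-x)/(z-1)"
  define s where "s = (x*z-1)/(z-1)"
  define w where "w = (y+1)/(y-1)"
  define w2 where "w2 = (z+1)/(z-1)"
  define c where "c = x + inverse x"
  define v where "v = x - inverse x"
  define ty where "ty = y + inverse y"
  define tz where "tz = z + inverse z"
  have E: "E_star x y z = Ecan x p q r s"
    unfolding p_def q_def r_def s_def by (rule E_star_Ecan)
  have P: "p = ((x+1)+(1-x)*w)/2" and Q: "q = ((x+1)-(1-x)*w)/2"
    unfolding p_def q_def w_def using pq_form[OF y1] by auto
  have R: "r = ((x+1)+(1-x)*w2)/2" and S: "s = ((x+1)-(1-x)*w2)/2"
    unfolding r_def s_def w2_def using pq_form[OF z1] by auto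
  note I = idents[OF x0 P Q R S c_def v_def]
  have c2: "c \<noteq> 2" unfolding c_def by (rule t_ne2[OF x0 x1])
  have ty2: "ty \<noteq> 2" unfolding ty_def by (rule t_ne2[OF y0 y1])
  have tz2: "tz \<noteq> 2" unfolding tz_def by (rule t_ne2[OF z0 z1])
  note Y = y_idents[OF y0 y1, folded w_def ty_def]
  note Z = y_idents[OF z0 z1, folded w2_def tz_def]
  have vv: "v*v = c*c - 4" unfolding v_def c_def by (rule x_ident[OF x0])
  have V1: "(v*w)*(v*w) = (c*c-4)*((ty+2)/(ty-2))"
    using vv Y(1) by (metis mult.assoc mult.commute)
  have V2: "(v*w2)*(v*w2) = (c*c-4)*((tz+2)/(tz-2))"
    using vv Z(1) by (metis mult.assoc mult.commute)
  have V3: "(w*w2)*(w*w2) = ((ty+2)/(ty-2))*((tz+2)/(tz-2))"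
    using Y(1) Z(1) by (metis mult.assoc mult.commute)
  show ?thesis
  proof
    assume "defined_over_Q (E_star x y z)"
    then obtain s0 Q0 where s0: "s0 \<noteq> 0" and Q0: "\<forall>m. Poly_Mapping.lookup Q0 m \<in> \<rat>"
      and EQ: "E_star x y z = PConst s0 * Q0"
      unfolding defined_over_Q_def by blast
    have lk: "Poly_Mapping.lookup (Ecan x p q r s) m = s0 * Poly_Mapping.lookup Q0 m" for m
      using EQ unfolding E by (simp add: lookup_PConst_mult)
    define q0 where "q0 = Poly_Mapping.lookup Q0 (M 0 0 2 2)"
    have xx: "x*x = s0 * q0" using lk[of "M 0 0 2 2"] unfolding q0_def Ecan_lookups by simp
    have q00: "q0 \<noteq> 0" using xx x0 by auto
    have key: "Poly_Mapping.lookup (Ecan x p q r s) m / (x*x) \<in> \<rat>" for m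
    proof -
      have "Poly_Mapping.lookup (Ecan x p q r s) m / (x*x) = Poly_Mapping.lookup Q0 m / q0"
        unfolding lk xx using s0 by simp
      then show ?thesis using Q0 q0_def by simp
    qed
    have rPP: "p*p/x \<in> \<rat>" using key[of "M 2 0 1 1"] unfolding Ecan_lookups xdiv[OF x0] .
    have rQQ: "q*q/x \<in> \<rat>" using key[of "M 0 2 1 1"] unfolding Ecan_lookups xdiv[OF x0] .
    have rRR: "r*r/x \<in> \<rat>" using key[of "M 1 1 2 0"] unfolding Ecan_lookups xdiv[OF x0] .
    have rSS: "s*s/x \<in> \<rat>" using key[of "M 1 1 0 2"] unfolding Ecan_lookups xdiv[OF x0] .
    have rPR: "p*r/x \<in> \<rat>"
    proof -
      have "-(p*r)/x \<in> \<rat>" using key[of "M 1 0 2 1"] unfolding Ecan_lookups xdiv[OF x0] .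
      then have "-(-(p*r)/x) \<in> \<rat>" by (rule Rats_minus_iff[THEN iffD2])
      then show ?thesis by simp
    qed
    have rmid: "p*q/x + r*s/x \<in> \<rat>"
    proof -
      have h: "(2*(p*q) - 2*x + 2*(r*s))/x \<in> \<rat>"
        using key[of "M 1 1 1 1"] unfolding Ecan_lookups xdiv[OF x0] .
      have e: "p*q/x + r*s/x = ((2*(p*q) - 2*x + 2*(r*s))/x + 2)/2"
        using x0 by (simp add: field_simps)
      have "((2*(p*q) - 2*x + 2*(r*s))/x + 2)/2 \<in> \<rat>"
        by (rule Rats_divide, rule Rats_add, rule h, simp_all)
      then show ?thesis by (subst e)
    qed
    note LS = lin_solve[OF I(1) I(2) I(3) I(4) I(5) I(6) I(7) c2 rPP rQQ rRR rSS rPR rmid]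
    have tyQ: "ty \<in> \<rat>" using LS(4) Y(3) by simp
    have tzQ: "tz \<in> \<rat>" using LS(5) Z(3) by simp
    have cs: "c \<in> {-2,-1,0,1}" using trace_int[OF Nx(2) Nx(1)] LS(1) c2 unfolding c_def by auto
    have tys: "ty \<in> {-2,-1,0,1}" using trace_int[OF Ny(2) Ny(1)] tyQ ty2 unfolding ty_def by auto
    have tzs: "tz \<in> {-2,-1,0,1}" using trace_int[OF Nz(2) Nz(1)] tzQ tz2 unfolding tz_def by auto
    have FC: "(c \<in> {-2,0} \<and> ty \<in> {-2,0} \<and> tz \<in> {-2,0}) \<or> (c \<in> {-2,-1,1} \<and> ty \<in> {-2,-1,1} \<and> tz \<in> {-2,-1,1})"
      by (rule final_case[OF cs tys tzs LS(2) V1 LS(3) V2 LS(6) V3])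
    then show "(x ^ 4 = 1 \<and> y ^ 4 = 1 \<and> z ^ 4 = 1) \<or> (x ^ 6 = 1 \<and> y ^ 6 = 1 \<and> z ^ 6 = 1)"
      unfolding c_def ty_def tz_def using t_to_pow[OF x0] t_to_pow[OF y0] t_to_pow[OF z0] by blast
  next
    assume "(x ^ 4 = 1 \<and> y ^ 4 = 1 \<and> z ^ 4 = 1) \<or> (x ^ 6 = 1 \<and> y ^ 6 = 1 \<and> z ^ 6 = 1)"
    then have H: "(c \<in> {-2,0} \<and> ty \<in> {-2,0} \<and> tz \<in> {-2,0}) \<or> (c \<in> {-2,-1,1} \<and> ty \<in> {-2,-1,1} \<and> tz \<in> {-2,-1,1})"
      unfolding c_def ty_def tz_def using pow_to_t[OF x0 x1] pow_to_t[OF y0 y1] pow_to_t[OF z0 z1] by blast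
    note IC = if_case[OF H V1 V2 V3]
    have cQ: "c \<in> \<rat>" and tyQ: "ty \<in> \<rat>" and tzQ: "tz \<in> \<rat>" using H by auto
    have wwQ: "w*w \<in> \<rat>" unfolding Y(1) using tyQ by simp
    have w2Q: "w2*w2 \<in> \<rat>" unfolding Z(1) using tzQ by simp
    have r1: "p*p/x \<in> \<rat>" by (rule quarter_Rats[OF I(1)]) (use cQ IC wwQ in simp)
    have r2: "q*q/x \<in> \<rat>" by (rule quarter_Rats[OF I(2)]) (use cQ IC wwQ in simp)
    have r3: "r*r/x \<in> \<rat>" by (rule quarter_Rats[OF I(3)]) (use cQ IC w2Q in simp)
    have r4: "s*s/x \<in> \<rat>" by (rule quarter_Rats[OF I(4)]) (use cQ IC w2Q in simp)
    have r5: "p*q/x \<in> \<rat>" by (rule quarter_Rats[OF I(5)]) (use cQ IC wwQ in simp)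
    have r6: "r*s/x \<in> \<rat>" by (rule quarter_Rats[OF I(6)]) (use cQ IC w2Q in simp)
    have r7: "p*r/x \<in> \<rat>" by (rule quarter_Rats[OF I(7)]) (use cQ IC in simp)
    have r8: "p*s/x \<in> \<rat>" by (rule quarter_Rats[OF I(8)]) (use cQ IC in simp)
    have r9: "q*r/x \<in> \<rat>" by (rule quarter_Rats[OF I(9)]) (use cQ IC in simp)
    have r10: "q*s/x \<in> \<rat>" by (rule quarter_Rats[OF I(10)]) (use cQ IC in simp)
    have RQ: "Poly_Mapping.lookup (Ecan x p q r s) m / (x*x) \<in> \<rat>" for m
      by (rule Ecan_ratQ[OF x0 r1 r2 r3 r4 r7 r8 r9 r10 r5 r6])
    define Q0 where "Q0 = PConst (inverse (x*x)) * E_star x y z"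
    have one: "(x*x) * inverse (x*x) = 1" using x0 by (intro right_inverse) simp
    have "E_star x y z = PConst (x*x) * Q0"
      unfolding Q0_def mult.assoc[symmetric] PConst_mult one PConst_1 by simp
    moreover have "\<forall>m. Poly_Mapping.lookup Q0 m \<in> \<rat>"
      unfolding Q0_def lookup_PConst_mult E using RQ by (simp add: divide_inverse mult.commute)
    moreover have "x*x \<noteq> 0" using x0 by simp
    ultimately show "defined_over_Q (E_star x y z)" unfolding defined_over_Q_def by blast
  qed
qed

end
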